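(* Let $\mathbb{V}$ be the variety in the language consisting of one binary operation symbol $*$ and two constant symbols $p$ and $0$, defined by the laws (writing $a*b*c$ for $(a*b)*c$) $$0*x = x*0 = 0,\qquad x*y*z = x*z*y,\qquad x*(y*z) = 0,\qquad x*y*y = 0.$$ Then for every integer $n \ge 0$, the free algebra in $\mathbb{V}$ on $n$ free generators has exactly $1 + (n+1)\cdot 2^{n+1}$ elements. In particular, $\mathbb{V}$ is locally finite. *)

theory Defs
  imports Main
begin

datatype trm = Var nat | Mul trm trm | P | Zero

primrec vars :: "trm \<Rightarrow> nat set" where
  "vars (Var i) = {i}"
| "vars (Mul s t) = vars s \<union> vars t"
| "vars P = {}"
| "vars Zero = {}"

primrec subst :: "(nat \<Rightarrow> trm) \<Rightarrow> trm \<Rightarrow> trm" where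
  "subst \<sigma> (Var i) = \<sigma> i"
| "subst \<sigma> (Mul s t) = Mul (subst \<sigma> s) (subst \<sigma> t)"
| "subst \<sigma> P = P"
| "subst \<sigma> Zero = Zero"

inductive law :: "trm \<Rightarrow> trm \<Rightarrow> bool" where
  "law (Mul Zero (Var 0)) Zero"
| "law (Mul (Var 0) Zero) Zero"
| "law (Mul (Mul (Var 0) (Var 1)) (Var 2)) (Mul (Mul (Var 0) (Var 2)) (Var 1))"
| "law (Mul (Var 0) (Mul (Var 1) (Var 2))) Zero"
| "law (Mul (Mul (Var 0) (Var 1)) (Var 1)) Zero"

inductive eqV :: "trm \<Rightarrow> trm \<Rightarrow> bool" where
  eqV_law: "law s t \<Longrightarrow> eqV (subst \<sigma> s) (subst \<sigma> t)"
| eqV_refl: "eqV t t"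
| eqV_sym: "eqV s t \<Longrightarrow> eqV t s"
| eqV_trans: "eqV s t \<Longrightarrow> eqV t u \<Longrightarrow> eqV s u"
| eqV_cong: "eqV s s' \<Longrightarrow> eqV t t' \<Longrightarrow> eqV (Mul s t) (Mul s' t')"

definition terms :: "nat \<Rightarrow> trm set" where
  "terms n = {t. vars t \<subseteq> {..<n}}"

definition free_alg :: "nat \<Rightarrow> trm set set" where
  "free_alg n = terms n // {(s, t). eqV s t}"

end

theory Submission
  imports Defs "HOL-Library.Multiset"
begin

type_synonym val = "(trm \<times> trm set) option"

definition mulA :: "val \<Rightarrow> val \<Rightarrow> val" where
  "mulA x y = (case x of None \<Rightarrow> None | Some (a, S) \<Rightarrow>
     (case y of None \<Rightarrow> None | Some (b, T) \<Rightarrow>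
        (if T = {} \<and> b \<notin> S then Some (a, insert b S) else None)))"

primrec ev :: "(nat \<Rightarrow> val) \<Rightarrow> trm \<Rightarrow> val" where
  "ev e (Var i) = e i"
| "ev e (Mul s t) = mulA (ev e s) (ev e t)"
| "ev e P = Some (P, {})"
| "ev e Zero = None"

definition nf :: "trm \<Rightarrow> val" where
  "nf = ev (\<lambda>i. Some (Var i, {}))"

lemma ev_subst: "ev e (subst \<sigma> t) = ev (ev e \<circ> \<sigma>) t"
  by (induction t) auto

lemma law_ev: "law s t \<Longrightarrow> ev e s = ev e t"
  by (induction rule: law.induct) (auto simp: mulA_def split: option.splits prod.splits)

lemma eqV_ev: "eqV s t \<Longrightarrow> ev e s = ev e t"
proof (induction rule: eqV.induct)
  case (eqV_law s t \<sigma>)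
  then show ?case by (simp add: ev_subst law_ev)
qed auto

lemma l1: "eqV (Mul Zero x) Zero"
  using eqV_law[OF law.intros(1), of "\<lambda>_. x"] by simp
lemma l2: "eqV (Mul x Zero) Zero"
  using eqV_law[OF law.intros(2), of "\<lambda>_. x"] by simp
lemma l3: "eqV (Mul (Mul x y) z) (Mul (Mul x z) y)"
  using eqV_law[OF law.intros(3), of "\<lambda>i. if i=0 then x else if i=1 then y else z"] by simp
lemma l4: "eqV (Mul x (Mul y z)) Zero"
  using eqV_law[OF law.intros(4), of "\<lambda>i. if i=0 then x else if i=1 then y else z"] by simp
lemma l5: "eqV (Mul (Mul x y) y) Zero"
  using eqV_law[OF law.intros(5), of "\<lambda>i. if i=0 then x else y"] by simp

lemma move_end: "eqV (Mul (foldl Mul u ds) x) (foldl Mul (Mul u x) ds)"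
proof (induction ds rule: rev_induct)
  case Nil
  then show ?case by (simp add: eqV_refl)
next
  case (snoc d ds)
  have 1: "eqV (Mul (Mul (foldl Mul u ds) d) x) (Mul (Mul (foldl Mul u ds) x) d)" by (rule l3)
  have 2: "eqV (Mul (Mul (foldl Mul u ds) x) d) (Mul (foldl Mul (Mul u x) ds) d)"
    by (rule eqV_cong[OF snoc eqV_refl])
  have "eqV (Mul (Mul (foldl Mul u ds) d) x) (Mul (foldl Mul (Mul u x) ds) d)"
    by (rule eqV_trans[OF 1 2])
  then show ?case by simp
qed

lemma perm_eqV: "mset bs = mset cs \<Longrightarrow> eqV (foldl Mul a bs) (foldl Mul a cs)"
proof (induction bs arbitrary: cs rule: rev_induct)
  case Nil
  then show ?case by (simp add: eqV_refl)
next
  case (snoc x bs)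
  have "x \<in># mset (bs @ [x])" by simp
  then have "x \<in> set cs" using snoc.prems by (metis set_mset_mset)
  then obtain c1 c2 where cs: "cs = c1 @ x # c2" by (meson split_list)
  have m: "mset bs = mset (c1 @ c2)" using snoc.prems cs by simp
  have "eqV (foldl Mul a (bs @ [x])) (Mul (foldl Mul a (c1 @ c2)) x)"
    using eqV_cong[OF snoc.IH[OF m] eqV_refl[of x]] by simp
  moreover have "eqV (Mul (foldl Mul a (c1 @ c2)) x) (foldl Mul a cs)"
    using move_end[of "foldl Mul a c1" c2 x] cs by simp
  ultimately show ?case using eqV_trans by blast
qed

lemma canon: "(nf t = None \<longrightarrow> eqV t Zero) \<and>
  (\<forall>a S. nf t = Some (a, S) \<longrightarrow> (\<exists>bs. distinct bs \<and> set bs = S \<and> eqV t (foldl Mul a bs)))"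
proof (induction t)
  case (Var i)
  then show ?case by (auto simp: nf_def intro!: exI[of _ "[]"] eqV_refl)
next
  case P
  then show ?case by (auto simp: nf_def intro!: exI[of _ "[]"] eqV_refl)
next
  case Zero
  then show ?case by (auto simp: nf_def intro: eqV_refl)
next
  case (Mul s u)
  have nfm: "nf (Mul s u) = mulA (nf s) (nf u)" by (simp add: nf_def)
  show ?case
  proof (cases "nf s")
    case None
    then have "eqV s Zero" using Mul by simp
    then have "eqV (Mul s u) (Mul Zero u)" by (rule eqV_cong[OF _ eqV_refl])
    then have "eqV (Mul s u) Zero" using l1 eqV_trans by blast
    then show ?thesis using None nfm by (simp add: mulA_def)
  next
    case (Some sa)
    then obtain a S where sS: "nf s = Some (a, S)" by (cases sa) auto
    then obtain bs where bs: "distinct bs" "set bs = S" "eqV s (foldl Mul a bs)" using Mul by blast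
    show ?thesis
    proof (cases "nf u")
      case None
      then have "eqV u Zero" using Mul by simp
      then have "eqV (Mul s u) (Mul s Zero)" by (rule eqV_cong[OF eqV_refl])
      then have "eqV (Mul s u) Zero" using l2 eqV_trans by blast
      then show ?thesis using None nfm sS by (simp add: mulA_def)
    next
      case (Some ua)
      then obtain b T where uT: "nf u = Some (b, T)" by (cases ua) auto
      then obtain cs where cs: "distinct cs" "set cs = T" "eqV u (foldl Mul b cs)" using Mul by blast
      show ?thesis
      proof (cases "T = {}")
        case False
        then obtain c cs' where "cs = cs' @ [c]" using cs by (metis rev_exhaust set_empty)
        then have "eqV u (Mul (foldl Mul b cs') c)" using cs by simp
        then have "eqV (Mul s u) (Mul s (Mul (foldl Mul b cs') c))" by (rule eqV_cong[OF eqV_refl])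
        then have "eqV (Mul s u) Zero" using l4 eqV_trans by blast
        then show ?thesis using False nfm sS uT by (simp add: mulA_def)
      next
        case True
        then have "cs = []" using cs by simp
        then have ub: "eqV u b" using cs by simp
        have su: "eqV (Mul s u) (Mul (foldl Mul a bs) b)" by (rule eqV_cong[OF bs(3) ub])
        show ?thesis
        proof (cases "b \<in> S")
          case True
          then obtain b1 b2 where "bs = b1 @ b # b2" using bs by (meson split_list)
          then have "mset bs = mset ((b1 @ b2) @ [b])" by simp
          then have "eqV (foldl Mul a bs) (Mul (foldl Mul a (b1 @ b2)) b)"
            using perm_eqV[of bs "(b1 @ b2) @ [b]" a] by simp
          then have "eqV (Mul (foldl Mul a bs) b) (Mul (Mul (foldl Mul a (b1 @ b2)) b) b)"
            by (rule eqV_cong[OF _ eqV_refl])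
          then have "eqV (Mul s u) Zero" using su l5 eqV_trans by blast
          then show ?thesis using True nfm sS uT by (simp add: mulA_def)
        next
          case False
          have "nf (Mul s u) = Some (a, insert b S)" using False \<open>T = {}\<close> nfm sS uT
            by (simp add: mulA_def)
          moreover have "distinct (bs @ [b]) \<and> set (bs @ [b]) = insert b S \<and>
              eqV (Mul s u) (foldl Mul a (bs @ [b]))" using False bs su by auto
          ultimately show ?thesis by (metis (no_types) option.distinct(1) option.inject prod.inject)
        qed
      qed
    qed
  qed
qed

lemma eqV_iff: "eqV s t \<longleftrightarrow> nf s = nf t"
proof
  assume "eqV s t" then show "nf s = nf t" unfolding nf_def by (rule eqV_ev)
next
  assume h: "nf s = nf t"
  show "eqV s t"
  proof (cases "nf s")
    case None
    then have "eqV s Zero" "eqV t Zero" using canon[of s] canon[of t] h by auto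
    then show ?thesis using eqV_trans[OF _ eqV_sym] by blast
  next
    case (Some v)
    then obtain a S where sS: "nf s = Some (a, S)" by (cases v) auto
    obtain bs where bs: "distinct bs" "set bs = S" "eqV s (foldl Mul a bs)" using canon[of s] sS by blast
    have tS: "nf t = Some (a, S)" using sS h by simp
    obtain cs where cs: "distinct cs" "set cs = S" "eqV t (foldl Mul a cs)" using canon[of t] tS by blast
    have "mset bs = mset cs" using bs cs by (metis mset_set_set)
    then have "eqV (foldl Mul a bs) (foldl Mul a cs)" by (rule perm_eqV)
    then have "eqV s (foldl Mul a cs)" using eqV_trans[OF bs(3)] by blast
    then show ?thesis using eqV_trans[OF _ eqV_sym[OF cs(3)]] by blast
  qed
qed

definition At :: "nat \<Rightarrow> trm set" where
  "At n = insert P (Var ` {..<n})"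

lemma nf_atoms: "vars t \<subseteq> {..<n} \<Longrightarrow> nf t = Some (a, S) \<Longrightarrow> a \<in> At n \<and> S \<subseteq> At n"
proof (induction t arbitrary: a S)
  case (Mul s u)
  then show ?case
    by (auto simp: nf_def mulA_def At_def split: option.splits prod.splits if_splits)
qed (auto simp: nf_def At_def)

lemma nf_surj: "a \<in> At n \<Longrightarrow> distinct bs \<Longrightarrow> set bs \<subseteq> At n \<Longrightarrow>
  nf (foldl Mul a bs) = Some (a, set bs) \<and> vars (foldl Mul a bs) \<subseteq> {..<n}"
proof (induction bs rule: rev_induct)
  case Nil
  then show ?case by (auto simp: nf_def At_def)
next
  case (snoc x xs)
  have "nf x = Some (x, {})" "vars x \<subseteq> {..<n}" using snoc.prems by (auto simp: nf_def At_def)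
  then show ?case using snoc by (auto simp: nf_def mulA_def)
qed

lemma image_nf: "nf ` terms n = insert None (Some ` (At n \<times> Pow (At n)))"
proof
  show "nf ` terms n \<subseteq> insert None (Some ` (At n \<times> Pow (At n)))"
  proof
    fix v assume "v \<in> nf ` terms n"
    then obtain t where t: "vars t \<subseteq> {..<n}" "v = nf t" by (auto simp: terms_def)
    show "v \<in> insert None (Some ` (At n \<times> Pow (At n)))"
    proof (cases v)
      case (Some w)
      then obtain a S where "v = Some (a, S)" by (cases w) auto
      then show ?thesis using nf_atoms[OF t(1)] t(2) by auto
    qed simp
  qed
next
  show "insert None (Some ` (At n \<times> Pow (At n))) \<subseteq> nf ` terms n"
  proof
    fix v assume v: "v \<in> insert None (Some ` (At n \<times> Pow (At n)))"
    show "v \<in> nf ` terms n"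
    proof (cases "v = None")
      case True
      have "nf Zero = None" "Zero \<in> terms n" by (auto simp: nf_def terms_def)
      then show ?thesis using True by force
    next
      case False
      then obtain a S where aS: "v = Some (a, S)" "a \<in> At n" "S \<subseteq> At n" using v by auto
      have "finite S" using aS(3) finite_subset by (auto simp: At_def)
      then obtain bs where bs: "distinct bs" "set bs = S" using finite_distinct_list by blast
      from nf_surj[OF aS(2) bs(1)] bs aS(3)
      have "nf (foldl Mul a bs) = v" "foldl Mul a bs \<in> terms n" using aS(1) by (auto simp: terms_def)
      then show ?thesis by force
    qed
  qed
qed

lemma card_At: "finite (At n) \<and> card (At n) = n + 1"
proof -
  have "card (Var ` {..<n}) = n" by (simp add: card_image inj_on_def)
  moreover have "P \<notin> Var ` {..<n}" by auto
  ultimately show ?thesis by (simp add: At_def)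
qed

theorem mainTheorem2:
  fixes n :: nat
  shows "finite (free_alg n) \<and> card (free_alg n) = 1 + (n + 1) * 2 ^ (n + 1)"
proof -
  define F where "F = (\<lambda>v. {t. v = nf t})"
  have fa: "free_alg n = F ` (nf ` terms n)"
    unfolding free_alg_def quotient_def F_def by (auto simp: eqV_iff)
  have inj: "inj_on F (nf ` terms n)"
    unfolding F_def inj_on_def by auto
  have fin: "finite (At n)" and cA: "card (At n) = n + 1" using card_At by auto
  have c: "card (nf ` terms n) = 1 + (n + 1) * 2 ^ (n + 1)"
    unfolding image_nf using fin cA
    by (simp add: card_image card_cartesian_product card_Pow)
  have f: "finite (nf ` terms n)" unfolding image_nf using fin by simp
  show ?thesis using fa inj c f by (simp add: card_image)
qed

end
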